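(* The quotient $\boldsymbol{T}[X_1,\ldots,X_n]/\boldsymbol{E}(\boldsymbol{T}^n)_0$ is cancellative, i.e. whenever $x\cdot y=x\cdot z$ in it, either $x=0$ or $y=z$.
   Context: $\boldsymbol{T}=\mathbb{R}\cup\{-\infty\}$ with $a\oplus b=\max\{a,b\}$, $a\odot b=a+b$; its zero is $-\infty$. $\boldsymbol{T}[X_1,\ldots,X_n]$ is the semiring of tropical polynomials in $n$ variables. $\boldsymbol{E}(\boldsymbol{T}^n)_0=\{(f,g)\in\boldsymbol{T}[X_1,\ldots,X_n]^2\mid f(x)=g(x)\ \forall x\in\boldsymbol{T}^n\}$, a congruence; the quotient is the semiring of tropical polynomial functions on $\boldsymbol{T}^n$. *)

theory Defs
  imports "HOL-Library.Extended_Real"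
begin

text \<open>The tropical semifield T = R \<union> {-\<infinity>} is modelled inside ereal (values \<noteq> \<infinity>),
  with tropical addition = max and tropical multiplication = +.
  A tropical polynomial in n variables X_0..X_{n-1} is given by its coefficient function on
  exponent vectors a :: nat \<Rightarrow> nat (coefficient -\<infinity> = monomial absent).\<close>

type_synonym tpoly = "(nat \<Rightarrow> nat) \<Rightarrow> ereal"

definition is_tpoly :: "nat \<Rightarrow> tpoly \<Rightarrow> bool" where
  "is_tpoly n p \<longleftrightarrow> finite {a. p a \<noteq> -\<infinity>} \<and> (\<forall>a. p a \<noteq> \<infinity>)
     \<and> (\<forall>a. p a \<noteq> -\<infinity> \<longrightarrow> (\<forall>i\<ge>n. a i = 0))"

text \<open>Points of T^n (coordinates i < n; further coordinates are irrelevant).\<close>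
definition is_tpoint :: "(nat \<Rightarrow> ereal) \<Rightarrow> bool" where
  "is_tpoint x \<longleftrightarrow> (\<forall>i. x i \<noteq> \<infinity>)"

text \<open>Tropical monomial x^a = sum_i a_i * x_i (with 0 * -\<infinity> = 0, the tropical one).\<close>
definition tmono :: "nat \<Rightarrow> (nat \<Rightarrow> nat) \<Rightarrow> (nat \<Rightarrow> ereal) \<Rightarrow> ereal" where
  "tmono n a x = (\<Sum>i<n. (if a i = 0 then 0 else ereal (real (a i)) * x i))"

definition teval :: "nat \<Rightarrow> tpoly \<Rightarrow> (nat \<Rightarrow> ereal) \<Rightarrow> ereal" where
  "teval n p x = (SUP a \<in> {a. p a \<noteq> -\<infinity>}. p a + tmono n a x)"

definition tzero :: tpoly where
  "tzero = (\<lambda>a. -\<infinity>)"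

definition tmul :: "tpoly \<Rightarrow> tpoly \<Rightarrow> tpoly" where
  "tmul p q = (\<lambda>a. SUP bc \<in> {(b, c). (\<lambda>i. b i + c i) = a}. p (fst bc) + q (snd bc))"

definition E0 :: "nat \<Rightarrow> (tpoly \<times> tpoly) set" where
  "E0 n = {(f, g). is_tpoly n f \<and> is_tpoly n g \<and>
                   (\<forall>x. is_tpoint x \<longrightarrow> teval n f x = teval n g x)}"

end

theory Submission imports Defs begin

lemma tmono_real:
  "tmono n a (\<lambda>i. ereal (Y i)) = ereal (\<Sum>i<n. if a i = 0 then 0 else real (a i) * Y i)"
  unfolding tmono_def sum_ereal[symmetric] by (intro sum.cong refl) (simp add: zero_ereal_def)

lemma tmono_cong:
  assumes "\<And>i. i < n \<Longrightarrow> a i \<noteq> 0 \<Longrightarrow> x i = x' i"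
  shows "tmono n a x = tmono n a x'"
  unfolding tmono_def by (rule sum.cong) (auto simp: assms)

lemma tmono_add_real:
  "(\<Sum>i<n. if b i + c i = 0 then 0 else real (b i + c i) * Y i) =
   (\<Sum>i<n. if b i = 0 then 0 else real (b i) * Y i) + (\<Sum>i<n. if c i = 0 then 0 else real (c i) * Y i)"
  by (simp add: sum.distrib[symmetric] algebra_simps) (rule sum.cong, auto simp: algebra_simps)

lemma teval_upper_real:
  assumes "is_tpoly n p"
  shows "p a + tmono n a (\<lambda>i. ereal (Y i)) \<le> teval n p (\<lambda>i. ereal (Y i))"
proof (cases "p a = -\<infinity>")
  case True thus ?thesis by (simp add: tmono_real)
next
  case False thus ?thesis unfolding teval_def by (intro SUP_upper) auto
qed

lemma teval_upper:
  assumes "p a \<noteq> -\<infinity>"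
  shows "p a + tmono n a x \<le> teval n p x"
  unfolding teval_def using assms by (intro SUP_upper) auto

lemma teval_least:
  assumes "\<And>a. p a \<noteq> -\<infinity> \<Longrightarrow> p a + tmono n a x \<le> c"
  shows "teval n p x \<le> c"
  unfolding teval_def using assms by (intro SUP_least) auto

lemma teval_empty:
  assumes "{a. p a \<noteq> -\<infinity>} = {}"
  shows "teval n p x = -\<infinity>"
  unfolding teval_def using assms by (simp add: bot_ereal_def)

lemma teval_attained:
  assumes "is_tpoly n p" "{a. p a \<noteq> -\<infinity>} \<noteq> {}"
  shows "\<exists>a. p a \<noteq> -\<infinity> \<and> teval n p x = p a + tmono n a x"
proof -
  let ?S = "(\<lambda>a. p a + tmono n a x) ` {a. p a \<noteq> -\<infinity>}"
  have "finite ?S" using assms(1) unfolding is_tpoly_def by auto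
  moreover have "?S \<noteq> {}" using assms(2) by auto
  moreover have "\<And>u v. u \<in> ?S \<Longrightarrow> v \<in> ?S \<Longrightarrow> sup u v \<in> ?S"
    by (metis (no_types, lifting) sup_ereal_def max_def)
  ultimately have "Sup ?S \<in> ?S" by (rule finite_Sup_in)
  thus ?thesis unfolding teval_def by auto
qed

lemma teval_real_fin:
  assumes "is_tpoly n p"
  shows "teval n p (\<lambda>i. ereal (Y i)) \<noteq> \<infinity>"
proof (cases "{a. p a \<noteq> -\<infinity>} = {}")
  case True thus ?thesis by (simp add: teval_empty)
next
  case False
  then obtain a where "p a \<noteq> -\<infinity>" "teval n p (\<lambda>i. ereal (Y i)) = p a + tmono n a (\<lambda>i. ereal (Y i))"
    using teval_attained[OF assms] by blast
  moreover have "p a \<noteq> \<infinity>" using assms unfolding is_tpoly_def by auto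
  ultimately show ?thesis by (simp add: tmono_real)
qed

lemma minf_add: "(x::ereal) \<noteq> \<infinity> \<Longrightarrow> -\<infinity> + x = -\<infinity>"
  by (cases x) auto

lemma add_minf: "(x::ereal) \<noteq> \<infinity> \<Longrightarrow> x + -\<infinity> = -\<infinity>"
  by (cases x) auto

lemma teval_mul_real:
  assumes f: "is_tpoly n f" and g: "is_tpoly n g"
  shows "teval n (tmul f g) (\<lambda>i. ereal (Y i)) = teval n f (\<lambda>i. ereal (Y i)) + teval n g (\<lambda>i. ereal (Y i))"
    (is "?L = ?F + ?G")
proof (rule antisym)
  define R where "R a = (\<Sum>i<n. if a i = 0 then 0 else real (a i) * Y i)" for a :: "nat \<Rightarrow> nat"
  have T: "tmono n a (\<lambda>i. ereal (Y i)) = ereal (R a)" for a by (simp add: tmono_real R_def)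
  have Radd: "R (\<lambda>i. b i + c i) = R b + R c" for b c unfolding R_def by (rule tmono_add_real)
  show "?L \<le> ?F + ?G"
  proof (rule teval_least)
    fix a assume "tmul f g a \<noteq> -\<infinity>"
    let ?A = "{(b, c). (\<lambda>i. b i + c i) = a}"
    have mem: "(a, \<lambda>_. 0) \<in> ?A" by simp
    have ne: "?A \<noteq> {}" proof assume "?A = {}" with mem show False by simp qed
    have "tmul f g a + tmono n a (\<lambda>i. ereal (Y i)) = (SUP bc\<in>?A. f (fst bc) + g (snd bc) + ereal (R a))"
      unfolding tmul_def T by (rule SUP_ereal_add_left[OF ne, symmetric]) simp
    also have "\<dots> \<le> ?F + ?G"
    proof (rule SUP_least)
      fix bc assume "bc \<in> ?A"
      then obtain b c where bc: "bc = (b, c)" "a = (\<lambda>i. b i + c i)" by auto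
      have "f (fst bc) + g (snd bc) + ereal (R a) = (f b + ereal (R b)) + (g c + ereal (R c))"
        using bc Radd by (simp add: ac_simps)
      also have "\<dots> \<le> ?F + ?G"
        using teval_upper_real[OF f, of b Y] teval_upper_real[OF g, of c Y]
        by (intro add_mono) (simp_all add: T)
      finally show "f (fst bc) + g (snd bc) + ereal (R a) \<le> ?F + ?G" .
    qed
    finally show "tmul f g a + tmono n a (\<lambda>i. ereal (Y i)) \<le> ?F + ?G" .
  qed
  show "?F + ?G \<le> ?L"
  proof (cases "{a. f a \<noteq> -\<infinity>} = {} \<or> {a. g a \<noteq> -\<infinity>} = {}")
    case True
    then show ?thesis using teval_real_fin[OF f, of Y] teval_real_fin[OF g, of Y]
      by (elim disjE) (simp_all add: teval_empty minf_add add_minf)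
  next
    case False
    then obtain b c where b: "f b \<noteq> -\<infinity>" "?F = f b + tmono n b (\<lambda>i. ereal (Y i))"
      and c: "g c \<noteq> -\<infinity>" "?G = g c + tmono n c (\<lambda>i. ereal (Y i))"
      using teval_attained[OF f] teval_attained[OF g] by meson
    define a where "a = (\<lambda>i. b i + c i)"
    have "f b + g c \<le> tmul f g a"
      unfolding tmul_def a_def by (rule SUP_upper2[of "(b, c)"]) auto
    hence "f b + g c + ereal (R a) \<le> tmul f g a + ereal (R a)" by (rule add_right_mono)
    also have "\<dots> \<le> ?L"
    proof (rule teval_upper[of "tmul f g" a n "\<lambda>i. ereal (Y i)", unfolded T])
      have "f b \<noteq> \<infinity>" "g c \<noteq> \<infinity>" using f g unfolding is_tpoly_def by auto
      hence "f b + g c \<noteq> -\<infinity>" using b c by auto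
      thus "tmul f g a \<noteq> -\<infinity>" using \<open>f b + g c \<le> tmul f g a\<close> by auto
    qed
    finally show ?thesis using b c by (simp add: T a_def Radd ac_simps)
  qed
qed


lemma sum_minf:
  fixes F :: "'a \<Rightarrow> ereal"
  assumes "finite A" "i0 \<in> A" "F i0 = -\<infinity>" "\<And>i. i \<in> A \<Longrightarrow> F i \<noteq> \<infinity>"
  shows "sum F A = -\<infinity>"
proof -
  have "sum F A = F i0 + sum F (A - {i0})" using assms(1,2) by (rule sum.remove)
  moreover have "sum F (A - {i0}) \<noteq> \<infinity>" using assms(4) by (simp add: sum_Pinfty)
  ultimately show ?thesis using assms(3) by (simp add: minf_add)
qed

lemma tmono_minf:
  assumes x: "is_tpoint x" and i0: "i0 < n" "a i0 \<noteq> 0" "x i0 = -\<infinity>"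
  shows "tmono n a x = -\<infinity>"
  unfolding tmono_def
proof (rule sum_minf)
  show "(if a i0 = 0 then 0 else ereal (real (a i0)) * x i0) = -\<infinity>" using i0 by simp
  fix i assume "i \<in> {..<n}"
  have "x i \<noteq> \<infinity>" using x unfolding is_tpoint_def by auto
  thus "(if a i = 0 then 0 else ereal (real (a i)) * x i) \<noteq> \<infinity>"
    by (cases "x i") auto
qed (use i0 in auto)

lemma density:
  assumes g: "is_tpoly n g" and h: "is_tpoly n h"
    and eq: "\<And>Y. teval n g (\<lambda>i. ereal (Y i)) = teval n h (\<lambda>i. ereal (Y i))"
    and x: "is_tpoint x"
  shows "teval n g x \<le> teval n h x"
proof (rule teval_least)
  fix a assume ga: "g a \<noteq> -\<infinity>"
  have gai: "g a \<noteq> \<infinity>" using g unfolding is_tpoly_def by auto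
  show "g a + tmono n a x \<le> teval n h x"
  proof (cases "\<exists>i<n. a i \<noteq> 0 \<and> x i = -\<infinity>")
    case True
    then obtain i where "i < n" "a i \<noteq> 0" "x i = -\<infinity>" by blast
    hence "tmono n a x = -\<infinity>" using tmono_minf[OF x] by blast
    thus ?thesis using gai by (simp add: add_minf)
  next
    case False
    define Y where "Y t i = (if x i = -\<infinity> then -t else real_of_ereal (x i))" for t :: real and i
    have xY: "tmono n b x = tmono n b (\<lambda>i. ereal (Y t i))"
      if "\<forall>i<n. b i \<noteq> 0 \<longrightarrow> x i \<noteq> -\<infinity>" for b t
    proof (rule tmono_cong)
      fix i assume "i < n" "b i \<noteq> 0"
      hence "x i \<noteq> -\<infinity>" using that by auto
      moreover have "x i \<noteq> \<infinity>" using x unfolding is_tpoint_def by auto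
      ultimately show "x i = ereal (Y t i)" unfolding Y_def by (cases "x i") auto
    qed
    obtain gr where gr: "g a = ereal gr" using ga gai by (cases "g a") auto
    have tx: "tmono n a x = tmono n a (\<lambda>i. ereal (Y 0 i))" using xY[of a 0] False by blast
    have "g a + tmono n a x = ereal (gr + (\<Sum>i<n. if a i = 0 then 0 else real (a i) * Y 0 i))"
      by (simp add: gr tx tmono_real)
    then obtain v where v: "g a + tmono n a x = ereal v" by blast
    show ?thesis
    proof (rule ccontr)
      assume "\<not> g a + tmono n a x \<le> teval n h x"
      hence lt: "teval n h x < ereal v" using v by simp
      let ?B = "{b. h b \<noteq> -\<infinity>}"
      have finB: "finite ?B" using h unfolding is_tpoly_def by auto
      have ev: "\<forall>b\<in>?B. eventually (\<lambda>t. h b + tmono n b (\<lambda>i. ereal (Y t i)) < ereal v) at_top"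
      proof
        fix b assume b: "b \<in> ?B"
        show "eventually (\<lambda>t. h b + tmono n b (\<lambda>i. ereal (Y t i)) < ereal v) at_top"
        proof (cases "\<exists>i<n. b i \<noteq> 0 \<and> x i = -\<infinity>")
          case False
          have "h b + tmono n b (\<lambda>i. ereal (Y t i)) < ereal v" for t
          proof -
            have "h b + tmono n b (\<lambda>i. ereal (Y t i)) = h b + tmono n b x"
            proof -
              have "tmono n b x = tmono n b (\<lambda>i. ereal (Y t i))" using xY[of b t] False by blast
              thus ?thesis by simp
            qed
            also have "\<dots> \<le> teval n h x" using b by (intro teval_upper) simp
            finally show ?thesis using lt by simp
          qed
          thus ?thesis by (intro always_eventually) simp
        next
          case True
          then obtain i0 where i0: "i0 < n" "b i0 \<noteq> 0" "x i0 = -\<infinity>" by blast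
          have hbi: "h b \<noteq> \<infinity>" using h unfolding is_tpoly_def by auto
          obtain hr where hr: "h b = ereal hr" using b hbi by (cases "h b") auto
          define K where "K = (\<Sum>i<n. \<bar>real (b i) * real_of_ereal (x i)\<bar>)"
          have bound: "(\<Sum>i<n. if b i = 0 then 0 else real (b i) * Y t i) \<le> K - t"
            if t: "t \<ge> 0" for t
          proof -
            have "(\<Sum>i<n. if b i = 0 then 0 else real (b i) * Y t i)
                \<le> (\<Sum>i<n. \<bar>real (b i) * real_of_ereal (x i)\<bar> - (if i = i0 then t else 0))"
            proof (rule sum_mono)
              fix i assume "i \<in> {..<n}"
              show "(if b i = 0 then 0 else real (b i) * Y t i)
                  \<le> \<bar>real (b i) * real_of_ereal (x i)\<bar> - (if i = i0 then t else 0)"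
              proof (cases "i = i0")
                case True
                have "1 \<le> real (b i0)" using i0 by simp
                hence "1 * t \<le> real (b i0) * t" using t by (rule mult_right_mono)
                thus ?thesis using True i0 by (simp add: Y_def)
              next
                case False
                have "0 \<le> real (b i) * t" using t by simp
                thus ?thesis using False by (auto simp: Y_def)
              qed
            qed
            also have "\<dots> = K - t" unfolding K_def sum_subtractf using i0 by simp
            finally show ?thesis .
          qed
          have "eventually (\<lambda>t. t > max 0 (K + hr - v)) at_top" by (rule eventually_gt_at_top)
          thus ?thesis
          proof (rule eventually_mono)
            fix t assume tt: "t > max 0 (K + hr - v)"
            have "hr + (\<Sum>i<n. if b i = 0 then 0 else real (b i) * Y t i) < v"
              using bound[of t] tt by simp
            thus "h b + tmono n b (\<lambda>i. ereal (Y t i)) < ereal v"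
              by (simp add: hr tmono_real)
          qed
        qed
      qed
      have "eventually (\<lambda>t. \<forall>b\<in>?B. h b + tmono n b (\<lambda>i. ereal (Y t i)) < ereal v) at_top"
        using finB ev by (rule eventually_ball_finite)
      then obtain t where t: "\<forall>b\<in>?B. h b + tmono n b (\<lambda>i. ereal (Y t i)) < ereal v"
        unfolding eventually_at_top_linorder by auto
      have "ereal v = g a + tmono n a (\<lambda>i. ereal (Y t i))" 
      proof -
        have "tmono n a x = tmono n a (\<lambda>i. ereal (Y t i))" using xY[of a t] False by blast
        thus ?thesis using v by simp
      qed
      also have "\<dots> \<le> teval n g (\<lambda>i. ereal (Y t i))" using ga by (rule teval_upper)
      also have "\<dots> = teval n h (\<lambda>i. ereal (Y t i))" by (rule eq)
      also have "\<dots> < ereal v"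
      proof (cases "?B = {}")
        case True thus ?thesis by (simp add: teval_empty)
      next
        case False
        then obtain b where "h b \<noteq> -\<infinity>"
          "teval n h (\<lambda>i. ereal (Y t i)) = h b + tmono n b (\<lambda>i. ereal (Y t i))"
          using teval_attained[OF h] by blast
        thus ?thesis using t by auto
      qed
      finally show False by simp
    qed
  qed
qed


theorem lemma3p1:
  fixes n :: nat and f g h :: tpoly
  assumes "is_tpoly n f" and "is_tpoly n g" and "is_tpoly n h"
    and "(tmul f g, tmul f h) \<in> E0 n"
  shows "(f, tzero) \<in> E0 n \<or> (g, h) \<in> E0 n"
proof (cases "{a. f a \<noteq> -\<infinity>} = {}")
  case True
  hence "f = tzero" unfolding tzero_def by auto
  moreover have "is_tpoly n tzero" unfolding is_tpoly_def tzero_def by simp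
  ultimately have "(f, tzero) \<in> E0 n" unfolding E0_def by simp
  thus ?thesis by simp
next
  case False
  then obtain a0 where a0: "f a0 \<noteq> -\<infinity>" by blast
  have f0: "f a0 \<noteq> \<infinity>" using assms(1) unfolding is_tpoly_def by auto
  have eqY: "teval n g (\<lambda>i. ereal (Y i)) = teval n h (\<lambda>i. ereal (Y i))" for Y
  proof -
    let ?y = "\<lambda>i. ereal (Y i)"
    have "is_tpoint ?y" unfolding is_tpoint_def by simp
    hence "teval n (tmul f g) ?y = teval n (tmul f h) ?y" using assms(4) unfolding E0_def by auto
    hence e: "teval n f ?y + teval n g ?y = teval n f ?y + teval n h ?y"
      using teval_mul_real[OF assms(1,2)] teval_mul_real[OF assms(1,3)] by simp
    have "f a0 + tmono n a0 ?y \<le> teval n f ?y" using a0 by (rule teval_upper)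
    moreover have "f a0 + tmono n a0 ?y \<noteq> -\<infinity>" using a0 f0 by (cases "f a0") (auto simp: tmono_real)
    ultimately have "teval n f ?y \<noteq> -\<infinity>" by auto
    moreover have "teval n f ?y \<noteq> \<infinity>" using assms(1) by (rule teval_real_fin)
    ultimately show ?thesis using e ereal_add_cancel_left by blast
  qed
  have "teval n g x = teval n h x" if "is_tpoint x" for x
    using density[OF assms(2,3) eqY that] density[OF assms(3,2) eqY[symmetric] that]
    by (rule antisym)
  hence "(g, h) \<in> E0 n" unfolding E0_def using assms(2,3) by simp
  thus ?thesis by simp
qed

end
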